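(* Let $r\geq 3$ be odd and let $2<m<n$ be integers. Put $$S=1+\sum_{k=1}^{(r-1)/2} n(m-1)^{k}(n-1)^{k-1}=1+n(m-1)+n(m-1)^2(n-1)+\cdots+n(m-1)^{\frac{r-1}{2}}(n-1)^{\frac{r-3}{2}},$$ and let $x$ be the smallest non-negative integer such that $(S+x)\cdot n$ is divisible by $m$. Then every $(m,n;2r)$-bipartite biregular cage has at least $(S+x)\left(1+\frac{n}{m}\right)$ vertices.
   Context: For integers $a,b\geq 2$ and even $g\ge 4$, an $(a,b;g)$-bipartite biregular graph is a finite simple bipartite graph of girth exactly $g$ in which all vertices of one bipartition class have degree $a$ and all vertices of the other class have degree $b$. An $(a,b;g)$-bipartite biregular cage is such a graph of minimum possible order. *)

theory Defs
  imports Complex_Main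
begin

definition simple_graph :: "nat set \<Rightarrow> (nat \<Rightarrow> nat \<Rightarrow> bool) \<Rightarrow> bool" where
  "simple_graph V E \<longleftrightarrow> finite V \<and> (\<forall>u v. E u v \<longrightarrow> E v u) \<and> (\<forall>v. \<not> E v v)
     \<and> (\<forall>u v. E u v \<longrightarrow> u \<in> V \<and> v \<in> V)"

definition degree :: "nat set \<Rightarrow> (nat \<Rightarrow> nat \<Rightarrow> bool) \<Rightarrow> nat \<Rightarrow> nat" where
  "degree V E v = card {u \<in> V. E v u}"

definition is_cycle :: "nat set \<Rightarrow> (nat \<Rightarrow> nat \<Rightarrow> bool) \<Rightarrow> nat list \<Rightarrow> bool" where
  "is_cycle V E cs \<longleftrightarrow> length cs \<ge> 3 \<and> distinct cs \<and> set cs \<subseteq> V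
     \<and> (\<forall>i. Suc i < length cs \<longrightarrow> E (cs ! i) (cs ! Suc i))
     \<and> E (last cs) (hd cs)"

definition has_girth :: "nat set \<Rightarrow> (nat \<Rightarrow> nat \<Rightarrow> bool) \<Rightarrow> nat \<Rightarrow> bool" where
  "has_girth V E g \<longleftrightarrow> (\<exists>cs. is_cycle V E cs \<and> length cs = g)
     \<and> (\<forall>cs. is_cycle V E cs \<longrightarrow> length cs \<ge> g)"

definition bipartite_biregular ::
  "nat set \<Rightarrow> (nat \<Rightarrow> nat \<Rightarrow> bool) \<Rightarrow> nat \<Rightarrow> nat \<Rightarrow> nat \<Rightarrow> bool" where
  "bipartite_biregular V E a b g \<longleftrightarrow> simple_graph V E \<and> has_girth V E g \<and>
     (\<exists>A B. A \<union> B = V \<and> A \<inter> B = {} \<and>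
        (\<forall>u v. E u v \<longrightarrow> (u \<in> A \<and> v \<in> B) \<or> (u \<in> B \<and> v \<in> A)) \<and>
        (\<forall>v\<in>A. degree V E v = a) \<and> (\<forall>v\<in>B. degree V E v = b))"

text \<open>A cage: a bipartite biregular graph of minimum order (any finite graph is
isomorphic to one on natural-number vertices, so comparing within nat loses nothing).\<close>

definition bb_cage :: "nat set \<Rightarrow> (nat \<Rightarrow> nat \<Rightarrow> bool) \<Rightarrow> nat \<Rightarrow> nat \<Rightarrow> nat \<Rightarrow> bool" where
  "bb_cage V E a b g \<longleftrightarrow> bipartite_biregular V E a b g \<and>
     (\<forall>V' E'. bipartite_biregular V' E' a b g \<longrightarrow> card V \<le> card V')"

end

theory Submission imports Defs begin

lemma closed_walk_cycle:
  assumes sg: "simple_graph V E" and L: "1 \<le> L" and cl: "f 0 = f L"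
    and w: "\<forall>i<L. E (f i) (f (Suc i))" and nb: "\<forall>i. i+2 \<le> L \<longrightarrow> f i \<noteq> f (i+2)"
  shows "\<exists>cs. is_cycle V E cs \<and> length cs \<le> L"
proof -
  define P where "P d \<longleftrightarrow> 0<d \<and> (\<exists>i. i+d \<le> L \<and> f i = f (i+d))" for d
  have PL: "P L" using L cl unfolding P_def by (intro conjI exI[of _ 0]) auto
  define d where "d = (LEAST d. P d)"
  have Pd: "P d" unfolding d_def by (rule LeastI[of P, OF PL])
  have dmin: "\<And>d'. P d' \<Longrightarrow> d \<le> d'" unfolding d_def by (rule Least_le)
  from Pd obtain i where i: "i+d \<le> L" "f i = f (i+d)" and d0: "0<d" unfolding P_def by blast
  have irr: "\<And>x. \<not> E x x" and inV: "\<And>u v. E u v \<Longrightarrow> u \<in> V \<and> v \<in> V"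
    using sg unfolding simple_graph_def by auto
  have d1: "d \<noteq> 1"
  proof
    assume "d = 1"
    then have "i < L" using i by simp
    then have "E (f i) (f (Suc i))" using w by blast
    with i \<open>d = 1\<close> irr show False by simp
  qed
  have d2: "d \<noteq> 2" using nb i by auto
  define cs where "cs = map f [i..<i+d]"
  have len: "length cs = d" unfolding cs_def by simp
  have nth: "\<And>k. k < d \<Longrightarrow> cs ! k = f (i+k)" unfolding cs_def by simp
  have dist: "distinct cs"
  proof (rule ccontr)
    assume "\<not> distinct cs"
    then obtain a b where ab: "a < d" "b < d" "a \<noteq> b" "cs!a = cs!b"
      unfolding distinct_conv_nth len by blast
    have "\<exists>a b. a < b \<and> b < d \<and> f (i+a) = f (i+b)"
    proof (cases "a < b")
      case True then show ?thesis using ab nth by metis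
    next
      case False then have "b < a" using ab by simp
      then show ?thesis using ab nth by metis
    qed
    then obtain a b where ab2: "a < b" "b < d" "f (i+a) = f (i+b)" by blast
    have "P (b-a)" unfolding P_def using ab2 i
      by (intro conjI exI[of _ "i+a"]) auto
    then have "d \<le> b - a" by (rule dmin)
    with ab2 show False by simp
  qed
  have adj: "\<And>k. Suc k < d \<Longrightarrow> E (cs!k) (cs!Suc k)"
  proof -
    fix k assume k: "Suc k < d"
    then have "E (f (i+k)) (f (Suc (i+k)))" using w i by auto
    then show "E (cs!k) (cs!Suc k)" using nth k by simp
  qed
  have sub: "set cs \<subseteq> V"
  proof
    fix x assume "x \<in> set cs"
    then obtain k where k: "k < d" "x = cs!k" using len by (metis in_set_conv_nth)
    then have "E (f (i+k)) (f (Suc (i+k)))" using w i by auto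
    then show "x \<in> V" using inV k nth by simp
  qed
  have lastc: "last cs = f (i + (d - 1))" proof -
    have "cs \<noteq> []" using len d0 by auto
    then have "last cs = cs ! (d - 1)" using len by (simp add: last_conv_nth)
    also have "\<dots> = f (i + (d - 1))" using nth d0 by simp
    finally show ?thesis .
  qed
  have hdc: "hd cs = f (i+d)" proof -
    have "cs \<noteq> []" using len d0 by auto
    then have "hd cs = cs ! 0" by (simp add: hd_conv_nth)
    also have "\<dots> = f i" using nth d0 by simp
    finally show ?thesis using i by simp
  qed
  have "i + (d - 1) < L" using i d0 by simp
  then have "E (f (i + (d - 1))) (f (Suc (i + (d - 1))))" using w by blast
  then have "E (last cs) (hd cs)" using lastc hdc d0 by simp
  moreover have "d \<ge> 3" using d0 d1 d2 by linarith
  moreover have "d \<le> L" using i by simp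
  ultimately show ?thesis using dist adj sub len unfolding is_cycle_def by (intro exI[of _ cs]) auto
qed

definition walkl :: "(nat \<Rightarrow> nat \<Rightarrow> bool) \<Rightarrow> nat list \<Rightarrow> bool" where
  "walkl E xs \<longleftrightarrow> (\<forall>i. Suc i < length xs \<longrightarrow> E (xs!i) (xs!Suc i))"

definition nbl :: "nat list \<Rightarrow> bool" where
  "nbl xs \<longleftrightarrow> (\<forall>i. i+2 < length xs \<longrightarrow> xs!i \<noteq> xs!(i+2))"

lemma closed_list_cycle:
  assumes sg: "simple_graph V E" and girth: "\<forall>cs. is_cycle V E cs \<longrightarrow> length cs \<ge> g"
    and w: "walkl E ys" and nb: "nbl ys" and l: "2 \<le> length ys" and c: "ys!0 = last ys"
    and lg: "length ys \<le> g"
  shows False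
proof -
  have "ys \<noteq> []" using l by auto
  then have c': "ys!0 = ys!(length ys - 1)" using c by (simp add: last_conv_nth)
  have "\<exists>cs. is_cycle V E cs \<and> length cs \<le> length ys - 1"
    by (rule closed_walk_cycle[OF sg, of "length ys - 1" "(!) ys"])
       (use l c' w nb in \<open>auto simp: walkl_def nbl_def\<close>)
  then obtain cs where "is_cycle V E cs" "length cs \<le> length ys - 1" by blast
  moreover then have "length cs \<ge> g" using girth by blast
  ultimately show False using lg l by linarith
qed

lemma nb_unique:
  assumes sg: "simple_graph V E" and girth: "\<forall>cs. is_cycle V E cs \<longrightarrow> length cs \<ge> g"
  shows "walkl E xs \<Longrightarrow> walkl E ys \<Longrightarrow> nbl xs \<Longrightarrow> nbl ys \<Longrightarrow> xs \<noteq> [] \<Longrightarrow> ys \<noteq> []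
    \<Longrightarrow> xs!0 = ys!0 \<Longrightarrow> last xs = last ys \<Longrightarrow> length xs + length ys \<le> g \<Longrightarrow> xs = ys"
proof (induction "length xs + length ys" arbitrary: xs ys rule: less_induct)
  case less
  have sym: "\<And>u v. E u v \<Longrightarrow> E v u" using sg unfolding simple_graph_def by auto
  show ?case
  proof (rule ccontr)
    assume ne: "xs \<noteq> ys"
    show False
    proof (cases "length xs = 1")
      case True
      then have xs: "xs = [xs!0]" by (cases xs) auto
      have "length ys \<noteq> 1"
      proof
        assume "length ys = 1"
        then have "ys = [ys!0]" by (cases ys) auto
        with xs less.prems ne show False by simp
      qed
      moreover have "length ys \<noteq> 0" using less.prems(6) by simp
      ultimately have "2 \<le> length ys" by linarith
      moreover have "ys!0 = last ys"
      proof -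
        have "last xs = xs!0" using xs by (metis last.simps)
        then show ?thesis using less.prems(7,8) by simp
      qed
      ultimately show False using closed_list_cycle[OF sg girth less.prems(2) less.prems(4)] less.prems True by simp
    next
      case F1: False
      show False
      proof (cases "length ys = 1")
        case True
        then have ys: "ys = [ys!0]" by (cases ys) auto
        have "length xs \<noteq> 0" using less.prems(5) by simp
        then have "2 \<le> length xs" using F1 by linarith
        moreover have "xs!0 = last xs"
        proof -
          have "last ys = ys!0" using ys by (metis last.simps)
          then show ?thesis using less.prems(7,8) by simp
        qed
        ultimately show False using closed_list_cycle[OF sg girth less.prems(1) less.prems(3)] less.prems True by simp
      next
        case F2: False
        have "length xs \<noteq> 0" "length ys \<noteq> 0" using less.prems(5,6) by simp_all
        then have lx: "2 \<le> length xs" and ly: "2 \<le> length ys" using F1 F2 by linarith+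
        show False
        proof (cases "xs!1 = ys!1")
          case True
          have "tl xs = tl ys"
          proof (rule less.hyps)
            show "length (tl xs) + length (tl ys) < length xs + length ys" using lx ly by simp
            show "walkl E (tl xs)" "walkl E (tl ys)" using less.prems(1,2) by (auto simp: walkl_def nth_tl)
            show "nbl (tl xs)" "nbl (tl ys)" using less.prems(3,4) by (auto simp: nbl_def nth_tl)
            show "tl xs \<noteq> []"
            proof
              assume "tl xs = []"
              then have "length (tl xs) = 0" by (metis list.size(3))
              with lx show False by simp
            qed
            show "tl ys \<noteq> []"
            proof
              assume "tl ys = []"
              then have "length (tl ys) = 0" by (metis list.size(3))
              with ly show False by simp
            qed
            show "tl xs ! 0 = tl ys ! 0" using True lx ly by (simp add: nth_tl)
            show "last (tl xs) = last (tl ys)" using less.prems lx ly \<open>tl xs \<noteq> []\<close> \<open>tl ys \<noteq> []\<close>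
              by (simp add: last_tl)
            show "length (tl xs) + length (tl ys) \<le> g" using less.prems by simp
          qed
          moreover have "hd xs = hd ys" using less.prems by (simp add: hd_conv_nth)
          ultimately have "xs = ys" using less.prems by (metis list.collapse)
          with ne show False by simp
        next
          case False
          define a where "a = length xs - 1"
          define b where "b = length ys - 1"
          define f where "f i = (if i \<le> a then xs!(a-i) else ys!(i-a))" for i
          have wx: "\<And>i. Suc i < length xs \<Longrightarrow> E (xs!i) (xs!Suc i)" using less.prems(1) by (auto simp: walkl_def)
          have wy: "\<And>i. Suc i < length ys \<Longrightarrow> E (ys!i) (ys!Suc i)" using less.prems(2) by (auto simp: walkl_def)
          have nx: "\<And>i. i+2 < length xs \<Longrightarrow> xs!i \<noteq> xs!(i+2)" using less.prems(3) by (auto simp: nbl_def)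
          have ny: "\<And>i. i+2 < length ys \<Longrightarrow> ys!i \<noteq> ys!(i+2)" using less.prems(4) by (auto simp: nbl_def)
          have "\<exists>cs. is_cycle V E cs \<and> length cs \<le> a + b"
          proof (rule closed_walk_cycle[OF sg])
            show "1 \<le> a + b" using lx ly a_def b_def by simp
            show "f 0 = f (a+b)"
            proof -
              have "f 0 = xs!a" by (simp add: f_def)
              also have "\<dots> = last xs" using less.prems(5) a_def by (simp add: last_conv_nth)
              also have "\<dots> = last ys" using less.prems by simp
              also have "\<dots> = ys!b" using less.prems(6) b_def by (simp add: last_conv_nth)
              also have "\<dots> = f (a+b)"
              proof -
                have "\<not> a + b \<le> a" using ly b_def by simp
                then show ?thesis by (simp add: f_def)
              qed
              finally show ?thesis .
            qed
            show "\<forall>i<a+b. E (f i) (f (Suc i))"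
            proof (intro allI impI)
              fix i assume i: "i < a+b"
              consider "i < a" | "i = a" | "a < i" by linarith
              then show "E (f i) (f (Suc i))"
              proof cases
                case 1
                then have "E (xs!(a - i - 1)) (xs!Suc (a-i-1))" using wx a_def by simp
                moreover have "Suc (a-i-1) = a - i" using 1 by simp
                ultimately show ?thesis using 1 sym by (simp add: f_def)
              next
                case 2
                then show ?thesis using wy[of 0] ly less.prems(7) by (simp add: f_def)
              next
                case 3
                then have "E (ys!(i-a)) (ys!Suc (i-a))" using wy i b_def by simp
                moreover have "Suc (i-a) = Suc i - a" using 3 by simp
                ultimately show ?thesis using 3 by (simp add: f_def)
              qed
            qed
            show "\<forall>i. i+2 \<le> a+b \<longrightarrow> f i \<noteq> f (i+2)"
            proof (intro allI impI)
              fix i assume i: "i+2 \<le> a+b"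
              consider "i+2 \<le> a" | "i+1 = a" | "i = a" | "a < i" by linarith
              then show "f i \<noteq> f (i+2)"
              proof cases
                case 1
                then have "xs!(a-i-2) \<noteq> xs!(a-i-2+2)" using nx a_def by simp
                moreover have "a-i-2+2 = a - i" "a - (i+2) = a-i-2" using 1 by simp_all
                ultimately show ?thesis using 1 by (auto simp: f_def)
              next
                case 2
                then have "f i = xs!1" "f (i+2) = ys!1" by (auto simp: f_def)
                then show ?thesis using False by simp
              next
                case 3
                then have "f i = ys!0" "f (i+2) = ys!2" using less.prems(7) by (auto simp: f_def)
                moreover have "2 < length ys" using 3 i b_def by simp
                ultimately show ?thesis using ny[of 0] by (simp add: numeral_2_eq_2)
              next
                case 4
                then have "ys!(i-a) \<noteq> ys!(i-a+2)" using ny i b_def by simp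
                moreover have "i-a+2 = i+2-a" using 4 by simp
                ultimately show ?thesis using 4 by (simp add: f_def)
              qed
            qed
          qed
          then obtain cs where "is_cycle V E cs" "length cs \<le> a + b" by blast
          moreover then have "length cs \<ge> g" using girth by blast
          ultimately show False using less.prems(9) a_def b_def lx ly by linarith
        qed
      qed
    qed
  qed
qed


definition nbrs :: "nat set \<Rightarrow> (nat \<Rightarrow> nat \<Rightarrow> bool) \<Rightarrow> nat list \<Rightarrow> nat set" where
  "nbrs V E xs = {u \<in> V. E (hd xs) u \<and> (2 \<le> length xs \<longrightarrow> u \<noteq> xs!1)}"

fun TT :: "nat set \<Rightarrow> (nat \<Rightarrow> nat \<Rightarrow> bool) \<Rightarrow> nat \<Rightarrow> nat \<Rightarrow> nat list set" where
  "TT V E v 0 = {[v]}"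
| "TT V E v (Suc l) = (\<lambda>(xs,u). u # xs) ` Sigma (TT V E v l) (nbrs V E)"

context
  fixes V E A B m n v
  assumes sg: "simple_graph V E" and AB: "A \<union> B = V" "A \<inter> B = {}"
    and bip: "\<forall>u w. E u w \<longrightarrow> (u \<in> A \<and> w \<in> B) \<or> (u \<in> B \<and> w \<in> A)"
    and dA: "\<forall>u\<in>A. degree V E u = m" and dB: "\<forall>u\<in>B. degree V E u = n" and vB: "v \<in> B"
begin

lemma sym: "E u w \<Longrightarrow> E w u" using sg unfolding simple_graph_def by blast
lemma inV: "E u w \<Longrightarrow> u \<in> V \<and> w \<in> V" using sg unfolding simple_graph_def by blast

lemma T_props: "xs \<in> TT V E v l \<Longrightarrow> length xs = Suc l \<and> last xs = v \<and> walkl E xs \<and> nbl xs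
   \<and> hd xs \<in> (if even l then B else A)"
proof (induction l arbitrary: xs)
  case 0
  then show ?case using vB by (auto simp: walkl_def nbl_def)
next
  case (Suc l)
  then obtain ys u where xs: "xs = u # ys" and ys: "ys \<in> TT V E v l" and u: "u \<in> nbrs V E ys" by auto
  have IH: "length ys = Suc l" "last ys = v" "walkl E ys" "nbl ys" "hd ys \<in> (if even l then B else A)"
    using Suc.IH[OF ys] by auto
  have ne: "ys \<noteq> []" using IH(1) by auto
  have Eu: "E (hd ys) u" and u1: "2 \<le> length ys \<Longrightarrow> u \<noteq> ys!1" using u by (auto simp: nbrs_def)
  have "walkl E xs" unfolding walkl_def
  proof (intro allI impI)
    fix i assume i: "Suc i < length xs"
    show "E (xs!i) (xs!Suc i)"
    proof (cases i)
      case 0 then show ?thesis using xs Eu sym ne by (simp add: hd_conv_nth)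
    next
      case (Suc j) then show ?thesis using xs IH(3) i by (simp add: walkl_def)
    qed
  qed
  moreover have "nbl xs" unfolding nbl_def
  proof (intro allI impI)
    fix i assume i: "i + 2 < length xs"
    show "xs!i \<noteq> xs!(i+2)"
    proof (cases i)
      case 0 then show ?thesis using xs u1 i by (simp add: numeral_2_eq_2)
    next
      case (Suc j) then show ?thesis using xs IH(4) i by (simp add: nbl_def)
    qed
  qed
  moreover have "hd xs \<in> (if even (Suc l) then B else A)"
    using bip Eu IH(5) AB(2) xs by (cases "even l") auto
  ultimately show ?case using xs IH ne by simp
qed

lemma T_finite: "finite (TT V E v l)"
proof (induction l)
  case 0 then show ?case by simp
next
  case (Suc l)
  have "finite V" using sg by (simp add: simple_graph_def)
  then have "\<And>xs. finite (nbrs V E xs)" unfolding nbrs_def by simp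
  then show ?case using Suc by simp
qed

lemma card_nbrs: "xs \<in> TT V E v l \<Longrightarrow>
   card (nbrs V E xs) = (if l = 0 then n else if even l then n - 1 else m - 1)"
proof -
  assume xs: "xs \<in> TT V E v l"
  note P = T_props[OF xs]
  show ?thesis
  proof (cases l)
    case 0
    then have "xs = [v]" using xs by simp
    then have "nbrs V E xs = {u \<in> V. E v u}" by (simp add: nbrs_def)
    then show ?thesis using dB vB 0 by (simp add: degree_def)
  next
    case (Suc k)
    then have l2: "2 \<le> length xs" using P by simp
    have "E (xs!0) (xs!Suc 0)" using P l2 by (simp add: walkl_def)
    moreover have "hd xs = xs!0"
    proof -
      have "xs \<noteq> []" using l2 by auto
      then show ?thesis by (simp add: hd_conv_nth)
    qed
    ultimately have in1: "xs!1 \<in> {u \<in> V. E (hd xs) u}" using inV by auto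
    have "nbrs V E xs = {u \<in> V. E (hd xs) u} - {xs!1}" using l2 by (auto simp: nbrs_def)
    then have "card (nbrs V E xs) = degree V E (hd xs) - 1"
      using in1 by (simp add: degree_def)
    then show ?thesis using P dA dB Suc by (cases "even l") auto
  qed
qed

lemma card_T_Suc: "card (TT V E v (Suc l)) =
   card (TT V E v l) * (if l = 0 then n else if even l then n - 1 else m - 1)"
proof -
  have "inj_on (\<lambda>(xs,u). u # xs) (Sigma (TT V E v l) (nbrs V E))"
    by (auto simp: inj_on_def)
  then have "card (TT V E v (Suc l)) = card (Sigma (TT V E v l) (nbrs V E))"
    by (simp add: card_image)
  also have "\<dots> = (\<Sum>xs\<in>TT V E v l. card (nbrs V E xs))"
  proof (rule card_SigmaI)
    show "finite (TT V E v l)" by (rule T_finite)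
    have "finite V" using sg by (simp add: simple_graph_def)
    then show "\<forall>a\<in>TT V E v l. finite (nbrs V E a)" unfolding nbrs_def by simp
  qed
  also have "\<dots> = (\<Sum>xs\<in>TT V E v l. (if l = 0 then n else if even l then n - 1 else m - 1))"
    by (rule sum.cong) (auto simp: card_nbrs)
  finally show ?thesis by simp
qed

lemma card_T_even: "card (TT V E v (2*k+2)) = n * (m-1)^(k+1) * (n-1)^k"
proof (induction k)
  case 0
  have "card (TT V E v 1) = n" using card_T_Suc[of 0] by (simp del: TT.simps(2))
  then show ?case using card_T_Suc[of 1] by (simp del: TT.simps add: numeral_2_eq_2)
next
  case (Suc k)
  have "card (TT V E v (2*k+3)) = card (TT V E v (2*k+2)) * (n-1)"
  proof -
    have e: "2*k+3 = Suc (2*k+2)" by simp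
    show ?thesis unfolding e card_T_Suc[of "2*k+2"] by (simp del: TT.simps)
  qed
  moreover have "card (TT V E v (2*Suc k+2)) = card (TT V E v (2*k+3)) * (m-1)"
  proof -
    have e: "2*Suc k+2 = Suc (2*k+3)" by simp
    show ?thesis unfolding e card_T_Suc[of "2*k+3"] by (simp del: TT.simps)
  qed
  moreover have "\<And>c2 c3 c4 p q::nat. c2 = n*p^(k+1)*q^k \<Longrightarrow> c3 = c2*q \<Longrightarrow> c4 = c3*p
      \<Longrightarrow> c4 = n*p^(Suc k+1)*q^(Suc k)" by (simp add: algebra_simps)
  ultimately show ?case using Suc by blast
qed


lemma card_B_bound:
  assumes girth: "\<forall>cs. is_cycle V E cs \<longrightarrow> length cs \<ge> 2*r" and K: "2*K + 1 \<le> r"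
  shows "(\<Sum>k=0..K. card (TT V E v (2*k))) \<le> card B"
proof -
  define U where "U = (\<Union>k\<in>{0..K}. TT V E v (2*k))"
  have finV: "finite V" using sg by (simp add: simple_graph_def)
  have "card U = (\<Sum>k=0..K. card (TT V E v (2*k)))"
    unfolding U_def
  proof (rule card_UN_disjoint)
    show "finite {0..K}" by simp
    show "\<forall>i\<in>{0..K}. finite (TT V E v (2*i))" using T_finite by blast
    show "\<forall>i\<in>{0..K}. \<forall>j\<in>{0..K}. i \<noteq> j \<longrightarrow> TT V E v (2*i) \<inter> TT V E v (2*j) = {}"
    proof (intro ballI impI)
      fix i j :: nat assume "i \<noteq> j"
      show "TT V E v (2*i) \<inter> TT V E v (2*j) = {}"
      proof (rule ccontr)
        assume "TT V E v (2*i) \<inter> TT V E v (2*j) \<noteq> {}"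
        then obtain xs where "xs \<in> TT V E v (2*i)" "xs \<in> TT V E v (2*j)" by blast
        then have "length xs = Suc (2*i)" "length xs = Suc (2*j)" using T_props by blast+
        with \<open>i \<noteq> j\<close> show False by simp
      qed
    qed
  qed
  moreover have "inj_on hd U"
  proof (rule inj_onI)
    fix xs ys assume xs: "xs \<in> U" and ys: "ys \<in> U" and h: "hd xs = hd ys"
    from xs obtain i where i: "i \<le> K" "xs \<in> TT V E v (2*i)" unfolding U_def by auto
    from ys obtain j where j: "j \<le> K" "ys \<in> TT V E v (2*j)" unfolding U_def by auto
    note Px = T_props[OF i(2)] and Py = T_props[OF j(2)]
    have nx: "xs \<noteq> []" and ny: "ys \<noteq> []" using Px Py by auto
    show "xs = ys"
    proof (rule nb_unique[OF sg girth])
      show "walkl E xs" "walkl E ys" "nbl xs" "nbl ys" using Px Py by auto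
      show "xs \<noteq> []" "ys \<noteq> []" by fact+
      show "xs!0 = ys!0" using h nx ny by (simp add: hd_conv_nth)
      show "last xs = last ys" using Px Py by simp
      show "length xs + length ys \<le> 2*r" using Px Py i j K by simp
    qed
  qed
  moreover have "hd ` U \<subseteq> B"
  proof
    fix x assume "x \<in> hd ` U"
    then obtain xs k where "x = hd xs" "xs \<in> TT V E v (2*k)" unfolding U_def by auto
    then show "x \<in> B" using T_props by fastforce
  qed
  moreover have "finite B" using AB finV by (metis finite_Un)
  ultimately show ?thesis by (metis card_image card_mono)
qed

lemma edge_count: "card A * m = card B * n"
proof -
  have finV: "finite V" using sg by (simp add: simple_graph_def)
  have fA: "finite A" and fB: "finite B" using AB finV by (metis finite_Un)+
  have dA': "\<And>a. a \<in> A \<Longrightarrow> degree V E a = (\<Sum>b\<in>B. if E a b then 1 else 0)"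
  proof -
    fix a assume a: "a \<in> A"
    have "{u \<in> V. E a u} = {u \<in> B. E a u}" using a bip AB by blast
    then have "degree V E a = card {u \<in> B. E a u}" by (simp add: degree_def)
    also have "\<dots> = (\<Sum>b\<in>B. if E a b then 1 else 0)"
      using fB by (simp add: sum.inter_filter[symmetric])
    finally show "degree V E a = (\<Sum>b\<in>B. if E a b then 1 else 0)" .
  qed
  have dB': "\<And>b. b \<in> B \<Longrightarrow> degree V E b = (\<Sum>a\<in>A. if E a b then 1 else 0)"
  proof -
    fix b assume b: "b \<in> B"
    have "{u \<in> V. E b u} = {u \<in> A. E u b}" using b bip AB sym by blast
    then have "degree V E b = card {u \<in> A. E u b}" by (simp add: degree_def)
    also have "\<dots> = (\<Sum>a\<in>A. if E a b then 1 else 0)"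
      using fA by (simp add: sum.inter_filter[symmetric])
    finally show "degree V E b = (\<Sum>a\<in>A. if E a b then 1 else 0)" .
  qed
  have "card A * m = (\<Sum>a\<in>A. degree V E a)" using dA by simp
  also have "\<dots> = (\<Sum>a\<in>A. \<Sum>b\<in>B. if E a b then 1 else 0)" using dA' by simp
  also have "\<dots> = (\<Sum>b\<in>B. \<Sum>a\<in>A. if E a b then 1 else 0)" by (rule sum.swap)
  also have "\<dots> = (\<Sum>b\<in>B. degree V E b)" using dB' by simp
  also have "\<dots> = card B * n" using dB by simp
  finally show ?thesis .
qed

end


theorem mainTheorem3:
  fixes r m n :: nat and V :: "nat set" and E :: "nat \<Rightarrow> nat \<Rightarrow> bool"
  assumes "r \<ge> 3" and "odd r" and "2 < m" and "m < n"
    and "bb_cage V E m n (2 * r)"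
  shows "let S = 1 + (\<Sum>k = 1..(r - 1) div 2. n * (m - 1) ^ k * (n - 1) ^ (k - 1));
             x = (LEAST x::nat. m dvd (S + x) * n)
         in real (card V) \<ge> real (S + x) * (1 + real n / real m)"
proof -
  define S where "S = 1 + (\<Sum>k = 1..(r - 1) div 2. n * (m - 1) ^ k * (n - 1) ^ (k - 1))"
  define x where "x = (LEAST x::nat. m dvd (S + x) * n)"
  have bb: "bipartite_biregular V E m n (2*r)" using assms(5) by (simp add: bb_cage_def)
  then have sg: "simple_graph V E" and hg: "has_girth V E (2*r)" by (auto simp: bipartite_biregular_def)
  from bb obtain A B where AB: "A \<union> B = V" "A \<inter> B = {}"
    and bip: "\<forall>u w. E u w \<longrightarrow> (u \<in> A \<and> w \<in> B) \<or> (u \<in> B \<and> w \<in> A)"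
    and dA: "\<forall>u\<in>A. degree V E u = m" and dB: "\<forall>u\<in>B. degree V E u = n"
    unfolding bipartite_biregular_def by blast
  have girth: "\<forall>cs. is_cycle V E cs \<longrightarrow> length cs \<ge> 2*r" using hg by (simp add: has_girth_def)
  from hg obtain cs where "is_cycle V E cs" unfolding has_girth_def by blast
  then have "E (last cs) (hd cs)" by (simp add: is_cycle_def)
  then obtain v where vB: "v \<in> B" using bip by blast
  define K where "K = (r - 1) div 2"
  have K: "2*K + 1 \<le> r" using assms(1,2) K_def by (auto elim: oddE)
  note TB = card_B_bound[OF sg AB bip dA dB vB girth K]
  note TE = card_T_even[OF sg AB bip dA dB vB]
  have "(\<Sum>k=0..K. card (TT V E v (2*k))) = card (TT V E v (2*0)) + (\<Sum>k=Suc 0..K. card (TT V E v (2*k)))"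
    by (rule sum.atLeast_Suc_atMost) simp
  also have "\<dots> = S"
  proof -
    have "(\<Sum>k=1..K. card (TT V E v (2*k))) = (\<Sum>k=1..K. n * (m - 1) ^ k * (n - 1) ^ (k - 1))"
    proof (rule sum.cong[OF refl])
      fix k assume "k \<in> {1..K}"
      then obtain j where kj: "k = Suc j" by (cases k) auto
      have "2*k = 2*j+2" using kj by simp
      then show "card (TT V E v (2*k)) = n * (m - 1) ^ k * (n - 1) ^ (k - 1)"
        using TE[of j] kj by simp
    qed
    then show ?thesis unfolding S_def K_def by simp
  qed
  finally have SB: "S \<le> card B" using TB by simp
  have ec: "card A * m = card B * n" by (rule edge_count[OF sg AB bip dA dB vB])
  have "m dvd (S + (card B - S)) * n" using SB ec by (metis dvd_triv_right le_add_diff_inverse)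
  then have "x \<le> card B - S" unfolding x_def by (rule Least_le)
  then have xB: "S + x \<le> card B" using SB by simp
  have finV: "finite V" using sg by (simp add: simple_graph_def)
  have "card V = card A + card B" using AB finV
    by (metis card_Un_disjoint finite_Un)
  then have "real (card V) = real (card A) + real (card B)" by simp
  also have "real (card A) = real (card B) * real n / real m"
    using ec assms(3) by (simp add: field_simps flip: of_nat_mult)
  finally have "real (card V) = real (card B) * (1 + real n / real m)"
    by (simp add: field_simps)
  moreover have "real (S + x) * (1 + real n / real m) \<le> real (card B) * (1 + real n / real m)"
    using xB by (intro mult_right_mono) auto
  ultimately show ?thesis unfolding Let_def S_def[symmetric] x_def[symmetric] by simp
qed

end
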